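(* Let $p$ be a prime and let $s(n)_{n\ge0}$ be a sequence of $p$-adic integers satisfying $s(n+\ell)+a_{\ell-1}s(n+\ell-1)+\cdots+a_0s(n)=0$ for all $n\ge0$ with $a_i\in\mathbb{Z}_p$; let $g(x)=x^\ell+a_{\ell-1}x^{\ell-1}+\cdots+a_0$, let $K$ be a splitting field of $g$ over $\mathbb{Q}_p$ with ramification index $e$ and uniformizer $\pi$. If $e<p-1$ and every root $\beta$ of $g(x)$ in $K$ satisfies $\beta\equiv 1\pmod{\pi}$, then $s(n)_{n\ge0}$ can be interpolated to $\mathbb{Z}_p$, i.e. there is a continuous function $t:\mathbb{Z}_p\to K$ with $s(n)=t(n)$ for all $n\ge 0$.
   Context: For a finite extension $K/\mathbb{Q}_p$, $|\cdot|_p$ is the unique extension of the $p$-adic absolute value, the valuation $\nu_p$ ($|x|_p=p^{-\nu_p(x)}$) has image $\frac1e\mathbb Z$ on $K^\times$ where $e$ is the ramification index, and a uniformizer is an element $\pi$ with $\nu_p(\pi)=1/e$. Congruence modulo $\pi$ is in $\mathcal O_K=\{x\in K:|x|_p\le1\}$. *)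

theory Defs
  imports "HOL-Analysis.Analysis" "HOL-Computational_Algebra.Polynomial"
begin

text \<open>We work inside the field K itself (a type 'k), equipped with an absolute value nv.
  Q_p and Z_p are recovered as the closures of the rationals/integers in K.\<close>

definition nonarch_abs :: "('k::field \<Rightarrow> real) \<Rightarrow> bool" where
  "nonarch_abs nv \<longleftrightarrow> nv 0 = 0 \<and> (\<forall>x. x \<noteq> 0 \<longrightarrow> nv x > 0) \<and>
     (\<forall>x y. nv (x * y) = nv x * nv y) \<and> (\<forall>x y. nv (x + y) \<le> max (nv x) (nv y))"

definition padic_abs :: "nat \<Rightarrow> ('k::field \<Rightarrow> real) \<Rightarrow> bool" where
  "padic_abs p nv \<longleftrightarrow> nonarch_abs nv \<and> nv (of_nat p) = 1 / real p"

definition nv_complete :: "('k::field \<Rightarrow> real) \<Rightarrow> bool" where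
  "nv_complete nv \<longleftrightarrow> (\<forall>X :: nat \<Rightarrow> 'k.
     (\<forall>\<epsilon>>0. \<exists>N. \<forall>m\<ge>N. \<forall>n\<ge>N. nv (X m - X n) < \<epsilon>) \<longrightarrow>
     (\<exists>L. \<forall>\<epsilon>>0. \<exists>N. \<forall>n\<ge>N. nv (X n - L) < \<epsilon>))"

definition nv_closure :: "('k::field \<Rightarrow> real) \<Rightarrow> 'k set \<Rightarrow> 'k set" where
  "nv_closure nv A = {x. \<forall>\<epsilon>>0. \<exists>a\<in>A. nv (x - a) < \<epsilon>}"

definition Qp_in :: "('k::field_char_0 \<Rightarrow> real) \<Rightarrow> 'k set" where
  "Qp_in nv = nv_closure nv (range of_rat)"

definition Zp_in :: "('k::field_char_0 \<Rightarrow> real) \<Rightarrow> 'k set" where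
  "Zp_in nv = nv_closure nv (range of_int)"

definition is_subfield :: "'k::field set \<Rightarrow> bool" where
  "is_subfield F \<longleftrightarrow> 0 \<in> F \<and> 1 \<in> F \<and> (\<forall>x\<in>F. \<forall>y\<in>F. x + y \<in> F \<and> x * y \<in> F) \<and>
     (\<forall>x\<in>F. - x \<in> F \<and> inverse x \<in> F)"

definition splitting_field_over :: "'k::field set \<Rightarrow> 'k poly \<Rightarrow> bool" where
  "splitting_field_over F g \<longleftrightarrow>
     (\<exists>rs. g = smult (lead_coeff g) (\<Prod>r\<leftarrow>rs. [:- r, 1:])) \<and>
     (\<forall>F'. is_subfield F' \<and> F \<subseteq> F' \<and> {r. poly g r = 0} \<subseteq> F' \<longrightarrow> F' = UNIV)"

definition ramification_index :: "nat \<Rightarrow> ('k::field \<Rightarrow> real) \<Rightarrow> nat \<Rightarrow> bool" where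
  "ramification_index p nv e \<longleftrightarrow> e > 0 \<and>
     {nv x | x. x \<noteq> 0} = {real p powr (real_of_int k / real e) | k. True}"

definition uniformizer :: "nat \<Rightarrow> ('k::field \<Rightarrow> real) \<Rightarrow> nat \<Rightarrow> 'k \<Rightarrow> bool" where
  "uniformizer p nv e \<pi> \<longleftrightarrow> \<pi> \<noteq> 0 \<and> nv \<pi> = real p powr (- 1 / real e)"

definition cong_mod_nv :: "('k::field \<Rightarrow> real) \<Rightarrow> 'k \<Rightarrow> 'k \<Rightarrow> 'k \<Rightarrow> bool" where
  "cong_mod_nv nv \<pi> x y \<longleftrightarrow> nv x \<le> 1 \<and> nv y \<le> 1 \<and> nv ((x - y) / \<pi>) \<le> 1"

definition nv_continuous_on :: "('k::field \<Rightarrow> real) \<Rightarrow> 'k set \<Rightarrow> ('k \<Rightarrow> 'k) \<Rightarrow> bool" where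
  "nv_continuous_on nv A t \<longleftrightarrow> (\<forall>x\<in>A. \<forall>\<epsilon>>0. \<exists>\<delta>>0. \<forall>y\<in>A.
      nv (y - x) < \<delta> \<longrightarrow> nv (t y - t x) < \<epsilon>)"

end

theory Submission imports Defs "HOL-Computational_Algebra.Primes"
begin


lemma binom_pow_dvd:
  fixes p :: nat
  assumes "prime p" "0 < k" "k \<le> p^m" "k < p^j"
  shows "p^(m-j) dvd (p^m choose k)"
proof -
  define v where "v = multiplicity p k"
  obtain y where ky: "k = p ^ v * y" "\<not> p dvd y"
  proof -
    have "k \<noteq> 0" using assms(2) by simp
    moreover have "\<not> is_unit p" using assms(1) not_prime_unit by blast
    ultimately show ?thesis using multiplicity_decompose'[of k p] that unfolding v_def by blast
  qed
  have pv: "p^v dvd k" using ky(1) by simp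
  have "p^v \<le> k" using dvd_imp_le[OF pv assms(2)] .
  hence "p^v < p^j" using assms(4) by linarith
  hence vj: "v < j" using power_less_imp_less_exp[OF prime_gt_1_nat[OF assms(1)]] by blast
  define C where "C = p^m choose k"
  have e: "k * C = p^m * ((p^m - 1) choose (k - 1))"
    unfolding C_def using times_binomial_minus1_eq[OF assms(2)] by blast
  have "p^m dvd k * C" unfolding e by (rule dvd_triv_left)
  moreover have "k * C = p^v * (y * C)" using ky(1) by (simp only: mult.assoc)
  ultimately have d: "p^m dvd p^v * (y * C)" by simp
  show ?thesis
  proof (cases "v \<le> m")
    case True
    hence eq: "p^m = p^v * p^(m-v)" by (simp flip: power_add)
    have "p^v * p^(m-v) dvd p^v * (y * C)" using d unfolding eq .
    moreover have "0 < p^v" using prime_gt_0_nat[OF assms(1)] by simp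
    ultimately have "p^(m-v) dvd y * C" using nat_mult_dvd_cancel1 by blast
    moreover have "coprime (p^(m-v)) y"
      using prime_imp_power_coprime[OF assms(1) ky(2), of "m-v"] coprime_commute by blast
    ultimately have "p^(m-v) dvd C" using coprime_dvd_mult_right_iff by blast
    moreover have "p^(m-j) dvd p^(m-v)" using vj by (simp add: le_imp_power_dvd)
    ultimately show ?thesis unfolding C_def using dvd_trans by blast
  next
    case False thus ?thesis using vj by simp
  qed
qed


context
  fixes nv :: "'k::field_char_0 \<Rightarrow> real"
  assumes na: "nonarch_abs nv"
begin

lemma nv0[simp]: "nv 0 = 0" using na unfolding nonarch_abs_def by blast
lemma nv_pos: "x \<noteq> 0 \<Longrightarrow> nv x > 0" using na unfolding nonarch_abs_def by blast
lemma nv_mult: "nv (x * y) = nv x * nv y" using na unfolding nonarch_abs_def by blast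
lemma nv_add: "nv (x + y) \<le> max (nv x) (nv y)" using na unfolding nonarch_abs_def by blast
lemma nv_nonneg: "nv x \<ge> 0" by (cases "x = 0") (auto dest: nv_pos)
lemma nv_eq0: "nv x = 0 \<longleftrightarrow> x = 0" using nv_pos by fastforce
lemma nv1[simp]: "nv 1 = 1"
proof -
  have "nv 1 = nv 1 * nv 1" using nv_mult[of 1 1] by simp
  moreover have "nv 1 > 0" using nv_pos by simp
  ultimately show ?thesis by simp
qed
lemma nv_m1: "nv (-1) = 1"
proof -
  have "nv (-1) * nv (-1) = 1" using nv_mult[of "-1" "-1"] by simp
  moreover have "nv (-1) > 0" using nv_pos by simp
  ultimately show ?thesis by (metis mult_cancel_right1 mult_le_cancel_left1 nle_le nv_nonneg
     less_eq_real_def mult_less_cancel_left1 not_less)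
qed
lemma nv_neg[simp]: "nv (- x) = nv x" using nv_mult[of "-1" x] nv_m1 by simp
lemma nv_minus_commute: "nv (x - y) = nv (y - x)" using nv_neg[of "x - y"] by simp
lemma nv_diff: "nv (x - y) \<le> max (nv x) (nv y)" using nv_add[of x "-y"] by simp
lemma nv_power: "nv (x ^ n) = nv x ^ n" by (induction n) (auto simp: nv_mult)
lemma nv_inverse: "x \<noteq> 0 \<Longrightarrow> nv (inverse x) = 1 / nv x"
proof -
  assume "x \<noteq> 0"
  hence "nv (inverse x) * nv x = 1" using nv_mult[of "inverse x" x] by simp
  thus ?thesis using nv_pos[OF \<open>x \<noteq> 0\<close>] by (simp add: field_simps)
qed
lemma nv_divide: "y \<noteq> 0 \<Longrightarrow> nv (x / y) = nv x / nv y"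
  by (simp add: divide_inverse nv_mult nv_inverse)
lemma nv_tri: "nv (x - z) \<le> max (nv (x - y)) (nv (y - z))"
  using nv_add[of "x - y" "y - z"] by simp
lemma nv_tri_lt: "nv (x - y) < e \<Longrightarrow> nv (y - z) < e \<Longrightarrow> nv (x - z) < e"
  using nv_tri[of x z y] by simp
lemma nv_sum_lt: "finite A \<Longrightarrow> e > 0 \<Longrightarrow> (\<And>i. i \<in> A \<Longrightarrow> nv (f i) < e) \<Longrightarrow> nv (sum f A) < e"
proof (induction A rule: finite_induct)
  case (insert x F)
  hence "nv (f x) < e" "nv (sum f F) < e" by auto
  thus ?case using nv_add[of "f x" "sum f F"] insert(1,2) by simp
qed simp
lemma nv_sum_le: "finite A \<Longrightarrow> e \<ge> 0 \<Longrightarrow> (\<And>i. i \<in> A \<Longrightarrow> nv (f i) \<le> e) \<Longrightarrow> nv (sum f A) \<le> e"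
proof (induction A rule: finite_induct)
  case (insert x F)
  hence "nv (f x) \<le> e" "nv (sum f F) \<le> e" by auto
  thus ?case using nv_add[of "f x" "sum f F"] insert(1,2) by simp
qed simp
lemma nv_of_nat_le: "nv (of_nat n) \<le> 1"
proof (induction n)
  case (Suc n) thus ?case using nv_add[of "of_nat n" 1] by (simp add: add.commute)
qed simp
lemma nv_of_int_le: "nv (of_int z) \<le> 1"
proof (cases "z \<ge> 0")
  case True thus ?thesis using nv_of_nat_le[of "nat z"] by simp
next
  case False
  hence "of_int z = - (of_nat (nat (- z)) :: 'k)" by simp
  thus ?thesis using nv_of_nat_le[of "nat (-z)"] by simp
qed
end


context
  fixes nv :: "'k::field_char_0 \<Rightarrow> real" and p :: nat
  assumes pa: "padic_abs p nv" and pp: "prime p"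
begin

lemma na: "nonarch_abs nv" using pa unfolding padic_abs_def by blast
lemma nvp: "nv (of_nat p) = 1 / real p" using pa unfolding padic_abs_def by blast
lemma p1: "p > 1" using pp prime_gt_1_nat by blast

lemma nv_coprime: assumes "\<not> int p dvd w" shows "nv (of_int w :: 'k) = 1"
proof -
  have "prime (int p)" using pp by simp
  hence "coprime (int p) w" using prime_imp_coprime assms by blast
  then obtain u v where uv: "u * int p + v * w = 1" using bezout_int[of "int p" w]
    by (auto simp: coprime_iff_gcd_eq_1)
  hence "(1::'k) = of_int u * of_nat p + of_int v * of_int w"
    by (metis of_int_1 of_int_add of_int_mult of_int_of_nat_eq)
  hence "1 \<le> max (nv (of_int u * of_nat p :: 'k)) (nv (of_int v * of_int w :: 'k))"
    using nv_add[OF na] nv1[OF na] by metis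
  moreover have "nv (of_int u * of_nat p :: 'k) < 1"
  proof -
    have "nv (of_int u * of_nat p :: 'k) = nv (of_int u :: 'k) * (1 / real p)"
      using nv_mult[OF na] nvp by simp
    also have "\<dots> \<le> 1 / real p"
      using nv_of_int_le[OF na, of u] nv_nonneg[OF na, of "of_int u"] p1 by (intro mult_left_le_one_le) auto
    also have "\<dots> < 1" using p1 by simp
    finally show ?thesis .
  qed
  ultimately have "1 \<le> nv (of_int v * of_int w :: 'k)" by linarith
  also have "\<dots> \<le> nv (of_int w :: 'k)"
    using nv_mult[OF na] nv_of_int_le[OF na, of v] nv_nonneg[OF na, of "of_int w"]
      nv_nonneg[OF na, of "of_int v"]
    by (simp add: mult_left_le_one_le)
  finally show ?thesis using nv_of_int_le[OF na, of w] by linarith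
qed

lemma nv_pow_mult: "nv (of_int (int p ^ m * z) :: 'k) \<le> (1 / real p) ^ m"
proof -
  have "nv (of_int (int p ^ m * z) :: 'k) = (1 / real p) ^ m * nv (of_int z :: 'k)"
    using nv_mult[OF na] nv_power[OF na] nvp by simp
  also have "\<dots> \<le> (1 / real p) ^ m"
    using nv_of_int_le[OF na, of z] by (intro mult_left_le) auto
  finally show ?thesis .
qed

lemma nv_dvd_nat: "p ^ m dvd c \<Longrightarrow> nv (of_nat c :: 'k) \<le> (1 / real p) ^ m"
  using nv_pow_mult[of m] by (auto elim!: dvdE) (metis of_int_of_nat_eq of_nat_mult of_nat_power)

lemma nv_small_dvd: "nv (of_int z :: 'k) < (1 / real p) ^ m \<Longrightarrow> int p ^ m dvd z"
proof (induction m arbitrary: z)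
  case 0 thus ?case by simp
next
  case (Suc m)
  have "(1 / real p) ^ Suc m \<le> (1 / real p) ^ m" by (rule power_decreasing) (use p1 in auto)
  hence "int p ^ m dvd z" using Suc by simp
  then obtain w where w: "z = int p ^ m * w" by blast
  have eq: "nv (of_int z :: 'k) = (1 / real p) ^ m * nv (of_int w :: 'k)"
    using nv_mult[OF na] nv_power[OF na] nvp w by simp
  have "int p dvd w"
  proof (rule ccontr)
    assume "\<not> int p dvd w"
    hence "nv (of_int z :: 'k) = (1 / real p) ^ m" using eq nv_coprime by simp
    moreover have "(1 / real p) ^ Suc m < (1 / real p) ^ m"
      by (rule power_strict_decreasing) (use p1 in auto)
    ultimately show False using Suc.prems by linarith
  qed
  thus ?case using w by auto
qed

end


definition opp :: "'a::comm_ring_1 poly \<Rightarrow> (nat \<Rightarrow> 'a) \<Rightarrow> nat \<Rightarrow> 'a" where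
  "opp q f n = (\<Sum>i\<le>degree q. coeff q i * f (n + i))"

lemma opp_ext: "degree q \<le> N \<Longrightarrow> opp q f n = (\<Sum>i\<le>N. coeff q i * f (n + i))"
  unfolding opp_def
  by (rule sum.mono_neutral_left) (auto simp: coeff_eq_0)

lemma opp_add: "opp (q + r) f n = opp q f n + opp r f n"
proof -
  let ?N = "max (degree q) (degree r)"
  have "degree (q + r) \<le> ?N" by (rule degree_add_le) auto
  hence "opp (q + r) f n = (\<Sum>i\<le>?N. coeff (q + r) i * f (n + i))" by (rule opp_ext)
  also have "\<dots> = (\<Sum>i\<le>?N. coeff q i * f (n + i)) + (\<Sum>i\<le>?N. coeff r i * f (n + i))"
    by (simp add: distrib_right sum.distrib)
  also have "\<dots> = opp q f n + opp r f n"
    by (simp add: opp_ext[symmetric])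
  finally show ?thesis .
qed

lemma opp_smult: "opp (smult c q) f n = c * opp q f n"
proof -
  have "opp (smult c q) f n = (\<Sum>i\<le>degree q. coeff (smult c q) i * f (n + i))"
    by (rule opp_ext) (rule degree_smult_le)
  thus ?thesis by (simp add: opp_def sum_distrib_left mult.assoc)
qed

lemma opp_0[simp]: "opp 0 f n = 0" by (simp add: opp_def)

lemma opp_pCons: "opp (pCons a q) f n = a * f n + opp q f (Suc n)"
proof -
  have "degree (pCons a q) \<le> Suc (degree q)" by simp
  hence "opp (pCons a q) f n = (\<Sum>i\<le>Suc (degree q). coeff (pCons a q) i * f (n + i))"
    by (rule opp_ext)
  also have "\<dots> = a * f n + (\<Sum>i\<le>degree q. coeff q i * f (Suc n + i))"
    by (subst sum.atMost_Suc_shift) simp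
  finally show ?thesis by (simp add: opp_def)
qed

lemma opp_mult: "opp (q * r) f n = opp q (opp r f) n"
proof (induction q arbitrary: n)
  case 0 thus ?case by simp
next
  case (pCons a q)
  show ?case
    by (simp add: opp_add opp_smult opp_pCons pCons.IH)
qed

lemma opp_1[simp]: "opp 1 f n = f n"
  by (simp add: opp_def)

lemma opp_X_pow: "opp ([:0,1:] ^ N) f n = f (n + N)"
proof (induction N arbitrary: n f)
  case (Suc N)
  have "opp ([:0,1:] ^ Suc N) f n = opp ([:0,1:]^N) (opp [:0,1:] f) n"
    by (simp only: opp_mult power_Suc2)
  also have "\<dots> = opp [:0,1:] f (n + N)" by (rule Suc.IH)
  also have "\<dots> = f (n + Suc N)" by (simp add: opp_pCons)
  finally show ?case .
qed simp

lemma opp_monom: "opp (monom c N) f n = c * f (n + N)"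
  by (simp add: monom_altdef opp_smult opp_X_pow)

lemma opp_sum: "finite A \<Longrightarrow> opp (\<Sum>k\<in>A. P k) f n = (\<Sum>k\<in>A. opp (P k) f n)"
  by (induction A rule: finite_induct) (simp_all add: opp_add)

lemma opp_linear: "opp q (\<lambda>m. f m + c * h m) n = opp q f n + c * opp q h n"
  by (simp add: opp_def algebra_simps sum.distrib sum_distrib_left)

lemma opp_zero_fun: "opp q (\<lambda>m. 0) n = 0"
  by (simp add: opp_def)

definition Dk :: "nat \<Rightarrow> (nat \<Rightarrow> 'a::comm_ring_1) \<Rightarrow> nat \<Rightarrow> 'a" where
  "Dk k f = opp ([:-1,1:] ^ k) f"

lemma Dk_0[simp]: "Dk 0 f n = f n" by (simp add: Dk_def)

lemma opp_D: "opp [:-1,1:] f n = f (Suc n) - f n"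
  by (simp add: opp_pCons)

lemma Dk_Suc: "Dk (Suc k) f n = Dk k (\<lambda>m. f (Suc m) - f m) n"
proof -
  have "Dk (Suc k) f n = opp ([:-1,1:] ^ k) (opp [:-1,1:] f) n"
    by (simp only: Dk_def opp_mult power_Suc2)
  also have "opp [:-1,1:] f = (\<lambda>m. f (Suc m) - f m)" by (rule ext) (simp add: opp_D)
  finally show ?thesis by (simp add: Dk_def)
qed

lemma Dk_Suc': "Dk (Suc k) f n = Dk k f (Suc n) - Dk k f n"
proof -
  have "Dk (Suc k) f n = opp [:-1,1:] (opp ([:-1,1:] ^ k) f) n"
    by (simp only: Dk_def opp_mult power_Suc)
  thus ?thesis by (simp add: opp_D Dk_def)
qed

lemma shift_expand: "f (n + N) = (\<Sum>k\<le>N. of_nat (N choose k) * Dk k f n)"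
proof -
  have "[:0,1:] = [:-1,1:] + (1 :: 'a poly)" by (simp add: one_pCons)
  hence "([:0,1:] :: 'a poly) ^ N = (\<Sum>k\<le>N. of_nat (N choose k) * [:-1,1:] ^ k * 1 ^ (N - k))"
    by (simp only: binomial_ring)
  also have "\<dots> = (\<Sum>k\<le>N. smult (of_nat (N choose k)) ([:-1,1:] ^ k))"
    by (simp add: of_nat_poly)
  finally have "f (n + N) = opp (\<Sum>k\<le>N. smult (of_nat (N choose k)) ([:-1,1:] ^ k)) f n"
    using opp_X_pow[of N f n] by simp
  also have "\<dots> = (\<Sum>k\<le>N. of_nat (N choose k) * Dk k f n)"
    by (simp add: opp_sum opp_smult Dk_def)
  finally show ?thesis .
qed


context
  fixes nv :: "'k::field_char_0 \<Rightarrow> real"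
  assumes na: "nonarch_abs nv"
begin

lemma Dk_bound1: "(\<And>m. nv (f m) \<le> 1) \<Longrightarrow> nv (Dk k f n) \<le> 1"
proof (induction k arbitrary: n)
  case 0 thus ?case by simp
next
  case (Suc k)
  have "nv (Dk k f (Suc n)) \<le> 1" "nv (Dk k f n) \<le> 1" using Suc by auto
  thus ?case using nv_diff[OF na, of "Dk k f (Suc n)" "Dk k f n"] by (simp add: Dk_Suc')
qed

lemma Dk_zero: "Dk k (\<lambda>m. 0) n = 0" by (simp add: Dk_def opp_zero_fun)

lemma main_bound:
  fixes rs :: "'k list" and s :: "nat \<Rightarrow> 'k" and \<rho> :: real
  assumes s1: "\<And>n. nv (s n) \<le> 1"
    and rs1: "\<And>r. r \<in> set rs \<Longrightarrow> nv (r - 1) \<le> \<rho>"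
    and rho: "0 \<le> \<rho>" "\<rho> \<le> 1"
    and zero: "\<And>n. opp (\<Prod>r\<leftarrow>rs. [:-r,1:]) s n = 0"
  shows "nv (Dk k s n) \<le> \<rho> ^ (k + 1 - length rs)"
proof -
  define L where "L = length rs"
  define S where "S i = opp (\<Prod>r\<leftarrow>take i rs. [:-r,1:]) s" for i
  have S0: "S 0 = s" by (rule ext) (simp add: S_def)
  have SL: "S L = (\<lambda>m. 0)" by (rule ext) (simp add: S_def L_def zero)
  have Srec: "S (Suc i) n = S i (Suc n) - rs ! i * S i n" if "i < L" for i n
  proof -
    have "take (Suc i) rs = take i rs @ [rs ! i]" using that L_def by (simp add: take_Suc_conv_app_nth)
    hence "(\<Prod>r\<leftarrow>take (Suc i) rs. [:-r,1:]) = [:-(rs!i),1:] * (\<Prod>r\<leftarrow>take i rs. [:-r,1:])"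
      by (simp add: mult.commute)
    hence "S (Suc i) n = opp [:-(rs!i),1:] (S i) n" by (simp only: S_def opp_mult)
    thus ?thesis by (simp add: opp_pCons)
  qed
  have rsi: "nv (rs ! i - 1) \<le> \<rho>" "nv (rs ! i) \<le> 1" if "i < L" for i
  proof -
    show "nv (rs ! i - 1) \<le> \<rho>" using rs1 that L_def by simp
    hence "nv (rs ! i - 1 + 1) \<le> 1" using nv_add[OF na, of "rs ! i - 1" 1] nv1[OF na] rho by simp
    thus "nv (rs ! i) \<le> 1" by simp
  qed
  have Sb: "nv (S i n) \<le> 1" if "i \<le> L" for i n
    using that
  proof (induction i arbitrary: n)
    case 0 thus ?case using S0 s1 by simp
  next
    case (Suc i)
    hence "i < L" by simp
    have a: "nv (S i (Suc n)) \<le> 1" "nv (S i n) \<le> 1" using Suc by auto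
    have "nv (rs ! i * S i n) \<le> 1"
      using rsi(2)[OF \<open>i < L\<close>] a(2) nv_mult[OF na] nv_nonneg[OF na]
      by (simp add: mult_le_one)
    thus ?case using Srec[OF \<open>i < L\<close>] nv_diff[OF na, of "S i (Suc n)" "rs ! i * S i n"] a by simp
  qed
  have Dstep: "Dk (Suc k) (S i) n = Dk k (S (Suc i)) n + (rs ! i - 1) * Dk k (S i) n"
    if "i < L" for i k n
  proof -
    have "(\<lambda>m. S i (Suc m) - S i m) = (\<lambda>m. S (Suc i) m + (rs ! i - 1) * S i m)"
      by (rule ext) (simp add: Srec[OF that] algebra_simps)
    hence "Dk (Suc k) (S i) n = Dk k (\<lambda>m. S (Suc i) m + (rs ! i - 1) * S i m) n"
      by (simp only: Dk_Suc)
    thus ?thesis by (simp only: Dk_def opp_linear)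
  qed
  have B: "\<forall>i n. i \<le> L \<longrightarrow> nv (Dk k (S i) n) \<le> \<rho> ^ (k + i + 1 - L)"
  proof (induction k)
    case 0
    show ?case
    proof (intro allI impI)
      fix i n assume "i \<le> L"
      show "nv (Dk 0 (S i) n) \<le> \<rho> ^ (0 + i + 1 - L)"
      proof (cases "i = L")
        case True thus ?thesis using SL nv0[OF na] by (simp add: rho)
      next
        case False thus ?thesis using Sb \<open>i \<le> L\<close> by simp
      qed
    qed
  next
    case (Suc k)
    show ?case
    proof (intro allI impI)
      fix i n assume "i \<le> L"
      show "nv (Dk (Suc k) (S i) n) \<le> \<rho> ^ (Suc k + i + 1 - L)"
      proof (cases "i = L")
        case True
        have "Dk (Suc k) (S i) n = 0" using True SL Dk_zero[of "Suc k" n] by simp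
        thus ?thesis using rho nv0[OF na] by simp
      next
        case False
        hence iL: "i < L" using \<open>i \<le> L\<close> by simp
        have a: "nv (Dk k (S (Suc i)) n) \<le> \<rho> ^ (Suc k + i + 1 - L)"
          using Suc iL by (metis Suc_leI add_Suc add_Suc_right)
        have "nv ((rs ! i - 1) * Dk k (S i) n) \<le> \<rho> * \<rho> ^ (k + i + 1 - L)"
          using nv_mult[OF na] rsi(1)[OF iL] Suc \<open>i \<le> L\<close> nv_nonneg[OF na] rho
          by (simp add: mult_mono)
        also have "\<dots> = \<rho> ^ (Suc (k + i + 1 - L))" by simp
        also have "\<dots> \<le> \<rho> ^ (Suc k + i + 1 - L)"
          by (rule power_decreasing) (use rho in auto)
        finally show ?thesis
          using Dstep[OF iL, of k n] nv_add[OF na, of "Dk k (S (Suc i)) n" "(rs ! i - 1) * Dk k (S i) n"] a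
          by simp
      qed
    qed
  qed
  show ?thesis using B[rule_format, of 0 n] S0 L_def by simp
qed

end


context
  fixes nv :: "'k::field_char_0 \<Rightarrow> real" and p :: nat
  assumes pa2: "padic_abs p nv" and pp2: "prime p"
begin

lemma na2: "nonarch_abs nv" using na[OF pa2 pp2] .
lemma p12: "p > 1" using p1[OF pa2 pp2] .

lemma unif_cont:
  fixes s :: "nat \<Rightarrow> 'k" and \<rho> :: real and L :: nat
  assumes s1: "\<And>n. nv (s n) \<le> 1"
    and DB: "\<And>k n. nv (Dk k s n) \<le> \<rho> ^ (k + 1 - L)"
    and rho: "0 \<le> \<rho>" "\<rho> < 1"
    and eps: "\<epsilon> > 0"
  shows "\<exists>m. \<forall>n c. nv (s (n + p ^ m * c) - s n) < \<epsilon>"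
proof -
  obtain N1 where N1: "\<rho> ^ N1 < \<epsilon>" using real_arch_pow_inv[OF eps rho(2)] by blast
  obtain N2 where N2: "(1 / real p) ^ N2 < \<epsilon>"
    using real_arch_pow_inv[OF eps, of "1 / real p"] p12 by auto
  define K0 where "K0 = N1 + L"
  define m where "m = K0 + N2"
  have "2 ^ K0 \<le> p ^ K0" by (rule power_mono) (use p12 in auto)
  hence K0p: "K0 < p ^ K0" using less_exp[of K0] by linarith
  have step: "nv (s (n + p ^ m) - s n) < \<epsilon>" for n
  proof -
    have "p ^ m > 0" using p12 by simp
    then obtain M where M: "p ^ m = Suc M" using gr0_implies_Suc by blast
    have "s (n + p ^ m) = (\<Sum>k\<le>p ^ m. of_nat (p ^ m choose k) * Dk k s n)"
      by (rule shift_expand)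
    also have "\<dots> = s n + (\<Sum>i\<le>M. of_nat (p ^ m choose Suc i) * Dk (Suc i) s n)"
      unfolding M by (subst sum.atMost_Suc_shift) simp
    finally have eq: "s (n + p ^ m) - s n = (\<Sum>i\<le>M. of_nat (p ^ m choose Suc i) * Dk (Suc i) s n)"
      by simp
    have "nv (of_nat (p ^ m choose Suc i) * Dk (Suc i) s n) < \<epsilon>" if "i \<le> M" for i
    proof (cases "Suc i \<ge> K0")
      case True
      have "nv (of_nat (p ^ m choose Suc i) * Dk (Suc i) s n) \<le> 1 * \<rho> ^ (Suc i + 1 - L)"
        unfolding nv_mult[OF na2]
        by (rule mult_mono) (use nv_of_nat_le[OF na2] DB nv_nonneg[OF na2] in auto)
      also have "\<dots> = \<rho> ^ (Suc i + 1 - L)" by simp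
      also have "\<dots> \<le> \<rho> ^ N1"
        by (rule power_decreasing) (use True K0_def rho in auto)
      finally show ?thesis using N1 by simp
    next
      case False
      hence lt: "Suc i < p ^ K0" using K0p by simp
      have le: "Suc i \<le> p ^ m" using M that by simp
      have "p ^ (m - K0) dvd (p ^ m choose Suc i)"
        by (rule binom_pow_dvd[OF pp2 _ le lt]) simp
      hence c: "nv (of_nat (p ^ m choose Suc i) :: 'k) \<le> (1 / real p) ^ N2"
        using nv_dvd_nat[OF pa2 pp2] m_def by simp
      have d: "nv (Dk (Suc i) s n) \<le> 1"
        by (rule Dk_bound1[OF na2 s1])
      have "nv (of_nat (p ^ m choose Suc i) * Dk (Suc i) s n) \<le> (1 / real p) ^ N2 * 1"
        unfolding nv_mult[OF na2] by (rule mult_mono) (use c d nv_nonneg[OF na2] in auto)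
      thus ?thesis using N2 by simp
    qed
    thus ?thesis unfolding eq by (intro nv_sum_lt[OF na2] eps) auto
  qed
  have "nv (s (n + p ^ m * c) - s n) < \<epsilon>" for n c
  proof (induction c)
    case 0 thus ?case using eps nv0[OF na2] by simp
  next
    case (Suc c)
    have "s (n + p ^ m * Suc c) = s ((n + p ^ m * c) + p ^ m)" by (simp add: algebra_simps)
    hence "nv (s (n + p ^ m * Suc c) - s (n + p ^ m * c)) < \<epsilon>" using step by simp
    thus ?case using Suc nv_tri_lt[OF na2] by blast
  qed
  thus ?thesis by blast
qed

end



context
  fixes nv :: "'k::field_char_0 \<Rightarrow> real" and p :: nat
  assumes pa3: "padic_abs p nv" and pp3: "prime p"
begin

lemma na3: "nonarch_abs nv" using na[OF pa3 pp3] .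
lemma p13: "p > 1" using p1[OF pa3 pp3] .

lemma small_pow: "\<epsilon> > 0 \<Longrightarrow> \<exists>M. (1 / real p) ^ M < \<epsilon>"
  using real_arch_pow_inv[of \<epsilon> "1 / real p"] p13 by auto

lemma Zp_dense:
  assumes "x \<in> Zp_in nv" "\<epsilon> > 0"
  shows "\<exists>n. nv (of_nat n - x) < \<epsilon>"
proof -
  obtain a where a: "a \<in> range of_int" "nv (x - a) < \<epsilon>"
    using assms unfolding Zp_in_def nv_closure_def by blast
  then obtain z where z: "a = of_int z" by blast
  obtain M where M: "(1 / real p) ^ M < \<epsilon>" using small_pow assms(2) by blast
  define n where "n = nat (z + int p ^ M * \<bar>z\<bar>)"
  have "int p ^ M \<ge> 1" using p13 by simp
  hence "z + int p ^ M * \<bar>z\<bar> \<ge> 0"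
    by (smt (verit, best) mult_cancel_right1 mult_right_mono abs_ge_zero)
  hence "(of_nat n :: 'k) = of_int z + of_int (int p ^ M * \<bar>z\<bar>)"
    unfolding n_def by (metis of_int_add of_int_of_nat_eq of_nat_nat)
  hence "nv (of_nat n - a) = nv (of_int (int p ^ M * \<bar>z\<bar>) :: 'k)" using z by simp
  also have "\<dots> \<le> (1 / real p) ^ M" by (rule nv_pow_mult[OF pa3 pp3])
  finally have "nv (of_nat n - a) < \<epsilon>" using M by simp
  moreover have "nv (a - x) < \<epsilon>" using a(2) nv_minus_commute[OF na3] by metis
  ultimately show ?thesis using nv_tri_lt[OF na3] by blast
qed

lemma of_nat_Zp: "(of_nat n :: 'k) \<in> Zp_in nv"
  unfolding Zp_in_def nv_closure_def
proof (intro CollectI allI impI)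
  fix \<epsilon> :: real assume "\<epsilon> > 0"
  hence "nv (of_nat n - of_int (int n) :: 'k) < \<epsilon>" using nv0[OF na3] by simp
  thus "\<exists>a\<in>range of_int. nv (of_nat n - a) < \<epsilon>" by blast
qed

lemma unif_delta:
  fixes s :: "nat \<Rightarrow> 'k"
  assumes U: "\<forall>\<epsilon>>0. \<exists>m. \<forall>n c. nv (s (n + p ^ m * c) - s n) < \<epsilon>"
    and eps: "\<epsilon> > 0"
  shows "\<exists>\<delta>>0. \<forall>n n'. nv (of_nat n - of_nat n' :: 'k) < \<delta> \<longrightarrow> nv (s n - s n') < \<epsilon>"
proof -
  obtain m where m: "\<forall>n c. nv (s (n + p ^ m * c) - s n) < \<epsilon>" using U eps by blast
  have key: "nv (s n - s n') < \<epsilon>" if "n' \<le> n" "nv (of_nat n - of_nat n' :: 'k) < (1 / real p) ^ m" for n n'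
  proof -
    have "(of_nat n - of_nat n' :: 'k) = of_int (int n - int n')" by simp
    hence "int p ^ m dvd (int n - int n')" using nv_small_dvd[OF pa3 pp3] that(2) by metis
    hence "int (p ^ m) dvd int (n - n')" using that(1) by (simp add: of_nat_diff)
    hence "p ^ m dvd (n - n')" by (simp only: int_dvd_int_iff)
    then obtain c where "n - n' = p ^ m * c" by blast
    hence "n = n' + p ^ m * c" using that(1) by simp
    thus ?thesis using m by simp
  qed
  show ?thesis
  proof (intro exI[of _ "(1 / real p) ^ m"] conjI allI impI)
    show "(1 / real p) ^ m > 0" using p13 by simp
    fix n n' assume h: "nv (of_nat n - of_nat n' :: 'k) < (1 / real p) ^ m"
    show "nv (s n - s n') < \<epsilon>"
    proof (cases "n' \<le> n")
      case True thus ?thesis using key h by blast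
    next
      case False
      hence "nv (s n' - s n) < \<epsilon>" using key h nv_minus_commute[OF na3] by (metis nle_le)
      thus ?thesis using nv_minus_commute[OF na3] by metis
    qed
  qed
qed

definition Pl :: "(nat \<Rightarrow> 'k) \<Rightarrow> 'k \<Rightarrow> 'k \<Rightarrow> bool" where
  "Pl s x L \<longleftrightarrow> (\<forall>\<epsilon>>0. \<exists>\<delta>>0. \<forall>n. nv (of_nat n - x) < \<delta> \<longrightarrow> nv (s n - L) < \<epsilon>)"

lemma Pl_unique:
  assumes "x \<in> Zp_in nv" "Pl s x L1" "Pl s x L2"
  shows "L1 = L2"
proof (rule ccontr)
  assume ne: "L1 \<noteq> L2"
  define \<epsilon> where "\<epsilon> = nv (L1 - L2)"
  have e: "\<epsilon> > 0" using ne nv_pos[OF na3] \<epsilon>_def by simp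
  obtain d1 where d1: "d1 > 0" "\<forall>n. nv (of_nat n - x) < d1 \<longrightarrow> nv (s n - L1) < \<epsilon>"
    using assms(2) e unfolding Pl_def by blast
  obtain d2 where d2: "d2 > 0" "\<forall>n. nv (of_nat n - x) < d2 \<longrightarrow> nv (s n - L2) < \<epsilon>"
    using assms(3) e unfolding Pl_def by blast
  obtain n where n: "nv (of_nat n - x) < min d1 d2" using Zp_dense[OF assms(1), of "min d1 d2"] d1 d2 by auto
  have "nv (L1 - s n) < \<epsilon>" using d1 n nv_minus_commute[OF na3] by (metis min_less_iff_conj)
  moreover have "nv (s n - L2) < \<epsilon>" using d2 n by simp
  ultimately have "nv (L1 - L2) < \<epsilon>" using nv_tri_lt[OF na3] by blast
  thus False using \<epsilon>_def by simp
qed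

lemma Pl_exists:
  fixes s :: "nat \<Rightarrow> 'k"
  assumes U: "\<forall>\<epsilon>>0. \<exists>m. \<forall>n c. nv (s (n + p ^ m * c) - s n) < \<epsilon>"
    and compl: "nv_complete nv" and x: "x \<in> Zp_in nv"
  shows "\<exists>L. Pl s x L"
proof -
  have "\<forall>j. \<exists>n. nv (of_nat n - x) < (1 / real p) ^ j"
    using Zp_dense[OF x] p13 by simp
  then obtain ns where ns: "\<And>j. nv (of_nat (ns j) - x) < (1 / real p) ^ j" by metis
  have close: "nv (of_nat (ns j) - of_nat (ns j') :: 'k) < (1 / real p) ^ J"
    if "j \<ge> J" "j' \<ge> J" for j j' J
  proof -
    have a: "(1 / real p) ^ j \<le> (1 / real p) ^ J" "(1 / real p) ^ j' \<le> (1 / real p) ^ J"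
      using that p13 by (auto intro!: power_decreasing)
    have "nv (x - of_nat (ns j')) < (1 / real p) ^ J"
      using ns[of j'] a nv_minus_commute[OF na3] by (metis order_less_le_trans)
    moreover have "nv (of_nat (ns j) - x) < (1 / real p) ^ J" using ns[of j] a by simp
    ultimately show ?thesis using nv_tri_lt[OF na3] by blast
  qed
  have cauchy: "\<forall>\<epsilon>>0. \<exists>N. \<forall>i\<ge>N. \<forall>j\<ge>N. nv (s (ns i) - s (ns j)) < \<epsilon>"
  proof (intro allI impI)
    fix \<epsilon> :: real assume e: "\<epsilon> > 0"
    obtain \<delta> where d: "\<delta> > 0" "\<forall>n n'. nv (of_nat n - of_nat n' :: 'k) < \<delta> \<longrightarrow> nv (s n - s n') < \<epsilon>"
      using unif_delta[OF U e] by blast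
    obtain J where J: "(1 / real p) ^ J < \<delta>" using small_pow d(1) by blast
    show "\<exists>N. \<forall>i\<ge>N. \<forall>j\<ge>N. nv (s (ns i) - s (ns j)) < \<epsilon>"
    proof (intro exI[of _ J] allI impI)
      fix i j assume "i \<ge> J" "j \<ge> J"
      hence "nv (of_nat (ns i) - of_nat (ns j) :: 'k) < (1 / real p) ^ J" by (rule close)
      hence "nv (of_nat (ns i) - of_nat (ns j) :: 'k) < \<delta>" using J by linarith
      thus "nv (s (ns i) - s (ns j)) < \<epsilon>" using d(2) by blast
    qed
  qed
  have imp: "(\<forall>\<epsilon>>0. \<exists>N. \<forall>i\<ge>N. \<forall>j\<ge>N. nv (s (ns i) - s (ns j)) < \<epsilon>) \<longrightarrow>
     (\<exists>L. \<forall>\<epsilon>>0. \<exists>N. \<forall>j\<ge>N. nv (s (ns j) - L) < \<epsilon>)"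
    using spec[OF compl[unfolded nv_complete_def], of "\<lambda>j. s (ns j)"] by simp
  obtain L where L: "\<forall>\<epsilon>>0. \<exists>N. \<forall>j\<ge>N. nv (s (ns j) - L) < \<epsilon>"
    using mp[OF imp cauchy] by blast
  have "Pl s x L" unfolding Pl_def
  proof (intro allI impI)
    fix \<epsilon> :: real assume e: "\<epsilon> > 0"
    obtain \<delta> where d: "\<delta> > 0" "\<forall>n n'. nv (of_nat n - of_nat n' :: 'k) < \<delta> \<longrightarrow> nv (s n - s n') < \<epsilon>"
      using unif_delta[OF U e] by blast
    obtain J where J: "(1 / real p) ^ J < \<delta>" using small_pow d(1) by blast
    obtain N where N: "\<forall>j\<ge>N. nv (s (ns j) - L) < \<epsilon>" using L e by blast
    define j where "j = max J N"
    have "(1 / real p) ^ j \<le> (1 / real p) ^ J"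
      unfolding j_def using p13 by (auto intro!: power_decreasing)
    hence "nv (of_nat (ns j) - x) < \<delta>" using ns[of j] J by linarith
    hence nj: "nv (x - of_nat (ns j)) < \<delta>" by (simp add: nv_minus_commute[OF na3])
    have sj: "nv (s (ns j) - L) < \<epsilon>" using N j_def by simp
    show "\<exists>\<delta>>0. \<forall>n. nv (of_nat n - x) < \<delta> \<longrightarrow> nv (s n - L) < \<epsilon>"
    proof (intro exI[of _ \<delta>] conjI allI impI)
      show "\<delta> > 0" by (rule d(1))
      fix n assume "nv (of_nat n - x) < \<delta>"
      hence "nv (of_nat n - of_nat (ns j) :: 'k) < \<delta>" using nj nv_tri_lt[OF na3] by blast
      hence "nv (s n - s (ns j)) < \<epsilon>" using d(2) by blast
      thus "nv (s n - L) < \<epsilon>" using sj nv_tri_lt[OF na3] by blast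
    qed
  qed
  thus ?thesis by blast
qed

lemma extension:
  fixes s :: "nat \<Rightarrow> 'k"
  assumes U: "\<forall>\<epsilon>>0. \<exists>m. \<forall>n c. nv (s (n + p ^ m * c) - s n) < \<epsilon>"
    and compl: "nv_complete nv"
  shows "\<exists>t :: 'k \<Rightarrow> 'k. nv_continuous_on nv (Zp_in nv) t \<and> (\<forall>n. s n = t (of_nat n))"
proof -
  define t where "t x = (SOME L. Pl s x L)" for x
  have tP: "Pl s x (t x)" if "x \<in> Zp_in nv" for x
    unfolding t_def using Pl_exists[OF U compl that] by (rule someI_ex)
  have tn: "s n = t (of_nat n)" for n
  proof -
    have P: "Pl s (of_nat n) (s n)" unfolding Pl_def
      using unif_delta[OF U] by blast
    have "t (of_nat n) = s n" by (rule Pl_unique[OF of_nat_Zp tP[OF of_nat_Zp] P])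
    thus ?thesis by simp
  qed
  have cont: "nv_continuous_on nv (Zp_in nv) t" unfolding nv_continuous_on_def
  proof (intro ballI allI impI)
    fix x \<epsilon> assume x: "x \<in> Zp_in nv" and e: "(\<epsilon>::real) > 0"
    obtain \<delta> where d: "\<delta> > 0" "\<forall>n n'. nv (of_nat n - of_nat n' :: 'k) < \<delta> \<longrightarrow> nv (s n - s n') < \<epsilon>"
      using unif_delta[OF U e] by blast
    obtain dx where dx: "dx > 0" "\<forall>n. nv (of_nat n - x) < dx \<longrightarrow> nv (s n - t x) < \<epsilon>"
      using tP[OF x] e unfolding Pl_def by blast
    show "\<exists>\<delta>>0. \<forall>y\<in>Zp_in nv. nv (y - x) < \<delta> \<longrightarrow> nv (t y - t x) < \<epsilon>"
    proof (intro exI[of _ \<delta>] conjI ballI impI)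
      show "\<delta> > 0" by (rule d(1))
      fix y assume y: "y \<in> Zp_in nv" and yx: "nv (y - x) < \<delta>"
      obtain dy where dy: "dy > 0" "\<forall>n. nv (of_nat n - y) < dy \<longrightarrow> nv (s n - t y) < \<epsilon>"
        using tP[OF y] e unfolding Pl_def by blast
      obtain n1 where n1: "nv (of_nat n1 - x) < min \<delta> dx"
        using Zp_dense[OF x] d(1) dx(1) by (metis min_less_iff_conj)
      obtain n2 where n2: "nv (of_nat n2 - y) < min \<delta> dy"
        using Zp_dense[OF y] d(1) dy(1) by (metis min_less_iff_conj)
      have a: "nv (s n1 - t x) < \<epsilon>" using dx n1 by simp
      have b: "nv (s n2 - t y) < \<epsilon>" using dy n2 by simp
      have "nv (y - of_nat n2) < \<delta>" using n2 nv_minus_commute[OF na3] by (metis min_less_iff_conj)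
      hence "nv (x - of_nat n2) < \<delta>" using yx nv_minus_commute[OF na3] nv_tri_lt[OF na3] by metis
      moreover have "nv (of_nat n1 - x) < \<delta>" using n1 by simp
      ultimately have "nv (of_nat n1 - of_nat n2 :: 'k) < \<delta>" using nv_tri_lt[OF na3] by blast
      hence c: "nv (s n2 - s n1) < \<epsilon>" using d(2) nv_minus_commute[OF na3] by metis
      have "nv (t y - s n2) < \<epsilon>" using b nv_minus_commute[OF na3] by metis
      hence "nv (t y - s n1) < \<epsilon>" using c nv_tri_lt[OF na3] by blast
      thus "nv (t y - t x) < \<epsilon>" using a nv_tri_lt[OF na3] by blast
    qed
  qed
  show ?thesis using cont tn by blast
qed

end


lemma Zp_le1:
  assumes na: "nonarch_abs nv" and x: "x \<in> Zp_in nv"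
  shows "nv x \<le> 1"
proof -
  have "\<forall>\<epsilon>>0. \<exists>a\<in>range of_int. nv (x - a) < \<epsilon>"
    using x unfolding Zp_in_def nv_closure_def by simp
  hence "\<exists>a\<in>range of_int. nv (x - a) < 1" by simp
  then obtain a where a: "a \<in> range of_int" "nv (x - a) < 1" by blast
  then obtain z where z: "a = of_int z" by blast
  have "nv (x - a + a) \<le> max (nv (x - a)) (nv a)" by (rule nv_add[OF na])
  thus ?thesis using a(2) z nv_of_int_le[OF na, of z] by simp
qed

theorem corollary3p6:
  fixes p :: nat and nv :: "'k::field_char_0 \<Rightarrow> real"
    and s a :: "nat \<Rightarrow> 'k" and l e :: nat and \<pi> :: 'k and g :: "'k poly"
  assumes "prime p"
    and "padic_abs p nv" and "nv_complete nv"
    and "\<forall>n. s n \<in> Zp_in nv"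
    and "\<forall>i<l. a i \<in> Zp_in nv"
    and "\<forall>n. s (n + l) + (\<Sum>i<l. a i * s (n + i)) = 0"
    and "g = monom 1 l + (\<Sum>i<l. monom (a i) i)"
    and "splitting_field_over (Qp_in nv) g"
    and "ramification_index p nv e"
    and "uniformizer p nv e \<pi>"
    and "e < p - 1"
    and "\<forall>\<beta>. poly g \<beta> = 0 \<longrightarrow> cong_mod_nv nv \<pi> \<beta> 1"
  shows "\<exists>t :: 'k \<Rightarrow> 'k. nv_continuous_on nv (Zp_in nv) t \<and> (\<forall>n. s n = t (of_nat n))"
proof -
  note pp = assms(1) and pa = assms(2)
  have na: "nonarch_abs nv" using na[OF pa pp] .
  have s1: "nv (s n) \<le> 1" for n using Zp_le1[OF na] assms(4) by blast
  have e0: "e > 0" using assms(9) unfolding ramification_index_def by blast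
  have pi: "\<pi> \<noteq> 0" "nv \<pi> = real p powr (- 1 / real e)"
    using assms(10) unfolding uniformizer_def by auto
  define \<rho> where "\<rho> = nv \<pi>"
  have rho0: "0 \<le> \<rho>" unfolding \<rho>_def by (rule nv_nonneg[OF na])
  have rho1: "\<rho> < 1" unfolding \<rho>_def pi(2)
    by (rule powr_less_one) (use p1[OF pa pp] e0 in auto)
  have cg: "coeff g l = 1"
    using assms(7) by (simp add: coeff_sum)
  have dg: "degree g \<le> l"
    unfolding assms(7)
    by (intro degree_add_le degree_sum_le) (auto intro: order_trans[OF degree_monom_le])
  have "l \<le> degree g" using cg by (intro le_degree) simp
  hence lc: "lead_coeff g = 1" using dg cg by simp
  obtain rs where rs: "g = smult (lead_coeff g) (\<Prod>r\<leftarrow>rs. [:- r, 1:])"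
    using assms(8) unfolding splitting_field_over_def by blast
  hence grs: "g = (\<Prod>r\<leftarrow>rs. [:- r, 1:])" using lc by simp
  have roots: "nv (r - 1) \<le> \<rho>" if "r \<in> set rs" for r
  proof -
    have "poly g r = 0" unfolding grs using that
      by (induction rs) auto
    hence "nv ((r - 1) / \<pi>) \<le> 1" using assms(12) unfolding cong_mod_nv_def by blast
    hence "nv (r - 1) / \<rho> \<le> 1" using nv_divide[OF na pi(1)] \<rho>_def by simp
    moreover have "\<rho> > 0" using nv_pos[OF na pi(1)] \<rho>_def by simp
    ultimately show ?thesis by (simp add: divide_le_eq)
  qed
  have zero: "opp (\<Prod>r\<leftarrow>rs. [:- r, 1:]) s n = 0" for n
  proof -
    have "opp g s n = s (n + l) + (\<Sum>i<l. a i * s (n + i))"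
      unfolding assms(7) by (simp add: opp_add opp_sum opp_monom)
    thus ?thesis using assms(6) grs by simp
  qed
  have DB: "nv (Dk k s n) \<le> \<rho> ^ (k + 1 - length rs)" for k n
    by (rule main_bound[OF na s1 roots rho0 less_imp_le[OF rho1] zero])
  have U: "\<forall>\<epsilon>>0. \<exists>m. \<forall>n c. nv (s (n + p ^ m * c) - s n) < \<epsilon>"
    using unif_cont[OF pa pp s1 DB rho0 rho1] by blast
  show ?thesis by (rule extension[OF pa pp U assms(3)])
qed

end
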